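(* For $n,k\ge0$: if $n\equiv 2k+1\pmod 3$ and $n\ge 2k+1$, then with $m=(n-2k-1)/3$, \[ b_{n,k}=\binom{n+1}{m}-3\binom{n}{m-1}; \] otherwise $b_{n,k}=0$.
   Context: The numbers $b_{n,k}$ ($n,k\ge0$) are defined together with $a_{n,k}$ by $a_{0,0}=1$, $b_{0,0}=0$, $a_{0,k}=b_{0,k}=0$ for $k\ge1$, and for $n\ge1$, $k\ge0$: $a_{n,k}=b_{n-1,k-1}+a_{n-1,k+1}$, $b_{n,k}=a_{n-1,k}+b_{n-1,k+1}$, with $b_{n-1,-1}=0$. ($b_{n,k}$ counts partial S-Motzkin paths of length $n$ ending at height $k$ whose last non-down step is a horizontal step.) Binomial coefficients with negative lower index are $0$. *)

theory Defs
  imports Main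
begin

fun ab :: "nat \<Rightarrow> nat \<Rightarrow> nat \<times> nat" where
  "ab 0 k = (if k = 0 then (1, 0) else (0, 0))"
| "ab (Suc n) k =
     ((if k = 0 then 0 else snd (ab n (k - 1))) + fst (ab n (Suc k)),
      fst (ab n k) + snd (ab n (Suc k)))"

definition a_num :: "nat \<Rightarrow> nat \<Rightarrow> nat" where
  "a_num n k = fst (ab n k)"

definition b_num :: "nat \<Rightarrow> nat \<Rightarrow> nat" where
  "b_num n k = snd (ab n k)"

definition binom_int :: "nat \<Rightarrow> int \<Rightarrow> int" where
  "binom_int n j = (if j < 0 then 0 else int (n choose nat j))"

end

theory Submission
  imports Defs
begin

lemma binom_int_pascal: "binom_int (Suc n) j = binom_int n j + binom_int n (j - 1)"
proof (cases "j < 0")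
  case True then show ?thesis by (simp add: binom_int_def)
next
  case False
  show ?thesis
  proof (cases "j = 0")
    case True then show ?thesis by (simp add: binom_int_def)
  next
    case False
    with \<open>\<not> j < 0\<close> have "nat j = Suc (nat (j - 1))" by simp
    then show ?thesis using \<open>\<not> j < 0\<close> False by (simp add: binom_int_def)
  qed
qed

lemma binom_int_neg: "j < 0 \<Longrightarrow> binom_int n j = 0"
  by (simp add: binom_int_def)

lemma ratio2: "binom_int (3 * j + 2) (int j + 1) = 2 * binom_int (3 * j + 2) (int j)"
proof -
  have "Suc j * (Suc (j + (2*j+1)) choose Suc j) = Suc (2*j+1) * (Suc (j + (2*j+1)) choose j)"
    by (rule Suc_times_binomial_add)
  hence "Suc j * (Suc (j + (2*j+1)) choose Suc j) = Suc j * (2 * (Suc (j + (2*j+1)) choose j))"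
    by (simp add: algebra_simps)
  hence "(Suc (j + (2*j+1)) choose Suc j) = 2 * (Suc (j + (2*j+1)) choose j)"
    by (subst (asm) mult_left_cancel) auto
  moreover have "Suc (j + (2*j+1)) = 3*j+2" by simp
  moreover have "nat (int j + 1) = Suc j" by simp
  ultimately show ?thesis by (simp add: binom_int_def)
qed

definition Af :: "nat \<Rightarrow> nat \<Rightarrow> int" where
  "Af n k = (if (int n - 2 * int k) mod 3 = 0 then
     (let m = (int n - 2 * int k) div 3 in binom_int n m - 2 * binom_int n (m - 1)) else 0)"

definition Bf :: "nat \<Rightarrow> nat \<Rightarrow> int" where
  "Bf n k = (if (int n - 2 * int k - 1) mod 3 = 0 then
     (let m = (int n - 2 * int k - 1) div 3 in binom_int (n + 1) m - 3 * binom_int n (m - 1)) else 0)"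

lemma B_rec: "Bf (Suc n) k = Af n k + Bf n (Suc k)"
proof (cases "(int n - 2 * int k) mod 3 = 0")
  case True
  define m where "m = (int n - 2 * int k) div 3"
  have e: "int n - 2 * int k = 3 * m" using True m_def by presburger
  have c1: "int (Suc n) - 2 * int k - 1 = 3 * m" using e by simp
  have c2: "int n - 2 * int (Suc k) - 1 = 3 * (m - 1)" using e by simp
  have p1: "binom_int (Suc n + 1) m = binom_int n m + 2 * binom_int n (m-1) + binom_int n (m-2)"
    using binom_int_pascal[of "Suc n" m] binom_int_pascal[of n m] binom_int_pascal[of n "m-1"]
    by (simp add: algebra_simps)
  have p2: "binom_int (Suc n) (m-1) = binom_int n (m-1) + binom_int n (m-2)"
    using binom_int_pascal[of n "m-1"] by (simp add: algebra_simps)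
  show ?thesis unfolding Af_def Bf_def using c1 c2 e p1 p2
    by (simp add: Let_def algebra_simps)
next
  case False
  have c1: "(int (Suc n) - 2 * int k - 1) mod 3 \<noteq> 0" using False by presburger
  have c2: "(int n - 2 * int (Suc k) - 1) mod 3 \<noteq> 0" using False by presburger
  show ?thesis unfolding Af_def Bf_def using False c1 c2 by simp
qed

lemma A_rec: "Af (Suc n) k = (if k = 0 then 0 else Bf n (k - 1)) + Af n (Suc k)"
proof (cases "(int (Suc n) - 2 * int k) mod 3 = 0")
  case True
  define m where "m = (int (Suc n) - 2 * int k) div 3"
  have e: "int (Suc n) - 2 * int k = 3 * m" using True m_def by presburger
  have c2: "int n - 2 * int (Suc k) = 3 * (m - 1)" using e by simp
  have p1: "binom_int (Suc n) m = binom_int n m + binom_int n (m-1)"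
    using binom_int_pascal[of n m] by simp
  have p2: "binom_int (Suc n) (m-1) = binom_int n (m-1) + binom_int n (m-2)"
    using binom_int_pascal[of n "m-1"] by (simp add: algebra_simps)
  show ?thesis
  proof (cases k)
    case 0
    have rhs: "Af (Suc n) k = binom_int (Suc n) m - 2 * binom_int (Suc n) (m - 1)"
      unfolding Af_def using e by (simp add: Let_def)
    have lhs: "Af n (Suc k) = binom_int n (m - 1) - 2 * binom_int n (m - 2)"
    proof -
      have d1: "(int n - 2 * int (Suc k)) mod 3 = 0" by (subst c2) simp
      have d2: "(int n - 2 * int (Suc k)) div 3 = m - 1" by (subst c2) simp
      have "Af n (Suc k) = binom_int n (m - 1) - 2 * binom_int n (m - 1 - 1)"
        unfolding Af_def Let_def by (simp only: d1 d2 if_True refl simp_thms)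
      thus ?thesis by (simp add: algebra_simps)
    qed
    have "binom_int n m = 2 * binom_int n (m - 1)"
    proof (cases "m \<ge> 1")
      case True
      obtain j where j: "m = int j + 1" using True by (metis add.commute le_add_diff_inverse zero_le_imp_eq_int add_le_cancel_left diff_ge_0_iff_ge)
      have "n = 3 * j + 2" using e 0 j by simp
      then show ?thesis using ratio2[of j] j by simp
    next
      case False
      then show ?thesis using e 0 by simp
    qed
    then show ?thesis using rhs lhs p1 p2 0 by simp
  next
    case (Suc j)
    have c1: "int n - 2 * int j - 1 = 3 * m" using e Suc by simp
    have b: "Bf n j = binom_int (n + 1) m - 3 * binom_int n (m - 1)"
      unfolding Bf_def using c1 by (simp add: Let_def)
    have rhs: "Af (Suc n) k = binom_int (Suc n) m - 2 * binom_int (Suc n) (m - 1)"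
      unfolding Af_def using e by (simp add: Let_def)
    have lhs: "Af n (Suc k) = binom_int n (m - 1) - 2 * binom_int n (m - 2)"
    proof -
      have d1: "(int n - 2 * int (Suc k)) mod 3 = 0" by (subst c2) simp
      have d2: "(int n - 2 * int (Suc k)) div 3 = m - 1" by (subst c2) simp
      have "Af n (Suc k) = binom_int n (m - 1) - 2 * binom_int n (m - 1 - 1)"
        unfolding Af_def Let_def by (simp only: d1 d2 if_True refl simp_thms)
      thus ?thesis by (simp add: algebra_simps)
    qed
    show ?thesis using b rhs lhs p1 p2 Suc by simp
  qed
next
  case False
  have c2: "(int n - 2 * int (Suc k)) mod 3 \<noteq> 0" using False by presburger
  have c1: "k > 0 \<Longrightarrow> (int n - 2 * int (k - 1) - 1) mod 3 \<noteq> 0" proof -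
    assume "k > 0"
    hence "int (k - 1) = int k - 1" by simp
    thus ?thesis using False by presburger
  qed
  show ?thesis unfolding Af_def Bf_def using False c1 c2 by auto
qed

lemma ab_closed: "int (fst (ab n k)) = Af n k \<and> int (snd (ab n k)) = Bf n k"
proof (induction n arbitrary: k)
  case 0
  show ?case
  proof (cases k)
    case 0 then show ?thesis by (simp add: Af_def Bf_def binom_int_def)
  next
    case (Suc j)
    have "(int 0 - 2 * int k) div 3 < 0" using Suc by simp
    hence "Af 0 k = 0" by (simp add: Af_def Let_def binom_int_neg)
    moreover have "(int 0 - 2 * int k - 1) div 3 < 0" using Suc by simp
    hence "Bf 0 k = 0" by (simp add: Bf_def Let_def binom_int_neg)
    ultimately show ?thesis using Suc by simp
  qed
next
  case (Suc n)
  show ?case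
    using Suc.IH[of "k - 1"] Suc.IH[of "Suc k"] Suc.IH[of k] A_rec[of n k] B_rec[of n k]
    by auto
qed

theorem mainTheorem10:
  fixes n k :: nat
  shows "int (b_num n k) =
    (if n mod 3 = (2 * k + 1) mod 3 \<and> n \<ge> 2 * k + 1
     then (let m = (int n - 2 * int k - 1) div 3 in
             binom_int (n + 1) m - 3 * binom_int n (m - 1))
     else 0)"
proof -
  have b: "int (b_num n k) = Bf n k" using ab_closed[of n k] by (simp add: b_num_def)
  have iff: "(n mod 3 = (2 * k + 1) mod 3) = ((int n - 2 * int k - 1) mod 3 = 0)" by presburger
  show ?thesis
  proof (cases "n \<ge> 2 * k + 1")
    case True then show ?thesis using b iff by (simp add: Bf_def)
  next
    case False
    hence "(int n - 2 * int k - 1) div 3 < 0" by simp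
    then show ?thesis using b False by (simp add: Bf_def Let_def binom_int_neg)
  qed
qed

end
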